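(* Let $G$ be a graph without isolated vertices. (i) If $f=(V_0,V_1,V_2)$ is any $\gamma_R(G)$-function, then $\gamma_{qtR}(G)\le \gamma_R(G)+|V_2|$. (ii) If $f'=(V'_0,V'_1,V'_2)$ is any $\gamma_{qtR}(G)$-function, then $\gamma_{tR}(G)\le \gamma_{qtR}(G)+|V'_1|$.
   Context: All graphs are finite, simple and undirected. For a function $f:V(G)\to\{0,1,2\}$ write $V_i=\{v: f(v)=i\}$ and identify $f$ with $(V_0,V_1,V_2)$; its weight is $\omega(f)=\sum_{v}f(v)=|V_1|+2|V_2|$. A Roman dominating function (RDF) is such an $f$ in which every vertex with label $0$ has a neighbor with label $2$; $\gamma_R(G)$ is the minimum weight of an RDF. A total Roman dominating function (TRDF) on a graph without isolated vertices is an RDF such that the subgraph induced by $V_1\cup V_2$ has no isolated vertices; $\gamma_{tR}(G)$ is the minimum weight of a TRDF. A quasi-total Roman dominating function (QTRDF) is an $f:V(G)\to\{0,1,2\}$ such that every vertex with label $0$ is adjacent to a vertex with label $2$, and every vertex that is isolated in the subgraph induced by $V_1\cup V_2$ has label $1$; $\gamma_{qtR}(G)$ is the minimum weight of a QTRDF. A $\gamma_R(G)$-function (resp. $\gamma_{qtR}(G)$-function) is an RDF (resp. QTRDF) of minimum weight. *)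

theory Defs
  imports Main
begin

definition simple_graph :: "'a set \<Rightarrow> ('a \<Rightarrow> 'a \<Rightarrow> bool) \<Rightarrow> bool" where
  "simple_graph V E \<longleftrightarrow> finite V \<and> (\<forall>u v. E u v \<longrightarrow> u \<in> V \<and> v \<in> V) \<and>
     (\<forall>u v. E u v \<longrightarrow> E v u) \<and> (\<forall>v. \<not> E v v)"

definition no_isolated :: "'a set \<Rightarrow> ('a \<Rightarrow> 'a \<Rightarrow> bool) \<Rightarrow> bool" where
  "no_isolated V E \<longleftrightarrow> (\<forall>v\<in>V. \<exists>u\<in>V. E v u)"

definition labeling :: "'a set \<Rightarrow> ('a \<Rightarrow> nat) \<Rightarrow> bool" where
  "labeling V f \<longleftrightarrow> (\<forall>v\<in>V. f v \<le> 2)"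

definition lclass :: "'a set \<Rightarrow> ('a \<Rightarrow> nat) \<Rightarrow> nat \<Rightarrow> 'a set" where
  "lclass V f i = {v\<in>V. f v = i}"

definition weight :: "'a set \<Rightarrow> ('a \<Rightarrow> nat) \<Rightarrow> nat" where
  "weight V f = (\<Sum>v\<in>V. f v)"

definition is_RDF :: "'a set \<Rightarrow> ('a \<Rightarrow> 'a \<Rightarrow> bool) \<Rightarrow> ('a \<Rightarrow> nat) \<Rightarrow> bool" where
  "is_RDF V E f \<longleftrightarrow> labeling V f \<and>
     (\<forall>v\<in>V. f v = 0 \<longrightarrow> (\<exists>u\<in>V. E v u \<and> f u = 2))"

text \<open>v is isolated in the subgraph induced by V_1 \<union> V_2 (assuming f v \<noteq> 0).\<close>
definition isolated_in_pos :: "'a set \<Rightarrow> ('a \<Rightarrow> 'a \<Rightarrow> bool) \<Rightarrow> ('a \<Rightarrow> nat) \<Rightarrow> 'a \<Rightarrow> bool" where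
  "isolated_in_pos V E f v \<longleftrightarrow> \<not> (\<exists>u\<in>V. E v u \<and> f u \<noteq> 0)"

definition is_TRDF :: "'a set \<Rightarrow> ('a \<Rightarrow> 'a \<Rightarrow> bool) \<Rightarrow> ('a \<Rightarrow> nat) \<Rightarrow> bool" where
  "is_TRDF V E f \<longleftrightarrow> is_RDF V E f \<and>
     (\<forall>v\<in>V. f v \<noteq> 0 \<longrightarrow> \<not> isolated_in_pos V E f v)"

definition is_QTRDF :: "'a set \<Rightarrow> ('a \<Rightarrow> 'a \<Rightarrow> bool) \<Rightarrow> ('a \<Rightarrow> nat) \<Rightarrow> bool" where
  "is_QTRDF V E f \<longleftrightarrow> is_RDF V E f \<and>
     (\<forall>v\<in>V. f v \<noteq> 0 \<longrightarrow> isolated_in_pos V E f v \<longrightarrow> f v = 1)"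

definition gamma_R :: "'a set \<Rightarrow> ('a \<Rightarrow> 'a \<Rightarrow> bool) \<Rightarrow> nat" where
  "gamma_R V E = (LEAST w. \<exists>f. is_RDF V E f \<and> weight V f = w)"

definition gamma_tR :: "'a set \<Rightarrow> ('a \<Rightarrow> 'a \<Rightarrow> bool) \<Rightarrow> nat" where
  "gamma_tR V E = (LEAST w. \<exists>f. is_TRDF V E f \<and> weight V f = w)"

definition gamma_qtR :: "'a set \<Rightarrow> ('a \<Rightarrow> 'a \<Rightarrow> bool) \<Rightarrow> nat" where
  "gamma_qtR V E = (LEAST w. \<exists>f. is_QTRDF V E f \<and> weight V f = w)"

definition is_gamma_R_function :: "'a set \<Rightarrow> ('a \<Rightarrow> 'a \<Rightarrow> bool) \<Rightarrow> ('a \<Rightarrow> nat) \<Rightarrow> bool" where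
  "is_gamma_R_function V E f \<longleftrightarrow> is_RDF V E f \<and> weight V f = gamma_R V E"

definition is_gamma_qtR_function :: "'a set \<Rightarrow> ('a \<Rightarrow> 'a \<Rightarrow> bool) \<Rightarrow> ('a \<Rightarrow> nat) \<Rightarrow> bool" where
  "is_gamma_qtR_function V E f \<longleftrightarrow> is_QTRDF V E f \<and> weight V f = gamma_qtR V E"

end

theory Submission
  imports Defs
begin

lemma upd_RDF:
  assumes fin: "finite V" and rdf: "is_RDF V E f" and S: "S \<subseteq> V" and S0: "\<forall>v\<in>S. f v = 0"
  defines "g \<equiv> (\<lambda>v. if v \<in> S then 1 else f v)"
  shows "is_RDF V E g" and "weight V g \<le> weight V f + card S"
    and "\<And>u. f u \<noteq> 0 \<Longrightarrow> g u \<noteq> 0"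
proof -
  show "is_RDF V E g" using rdf S0 unfolding is_RDF_def labeling_def g_def
    by (metis one_le_numeral zero_neq_numeral)
  have "weight V g \<le> (\<Sum>v\<in>V. f v + (if v \<in> S then 1 else 0))"
    unfolding weight_def g_def by (rule sum_mono) auto
  also have "\<dots> = weight V f + (\<Sum>v\<in>V. (if v \<in> S then 1 else 0))"
    unfolding weight_def by (simp add: sum.distrib)
  also have "(\<Sum>v\<in>V. (if v \<in> S then 1 else 0::nat)) = card S"
    using fin S by (simp add: sum.If_cases Int_absorb1)
  finally show "weight V g \<le> weight V f + card S" .
  show "\<And>u. f u \<noteq> 0 \<Longrightarrow> g u \<noteq> 0" unfolding g_def by auto
qed

lemma qtR_le: "is_QTRDF V E g \<Longrightarrow> gamma_qtR V E \<le> weight V g"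
  unfolding gamma_qtR_def by (rule Least_le) blast

lemma tR_le: "is_TRDF V E g \<Longrightarrow> gamma_tR V E \<le> weight V g"
  unfolding gamma_tR_def by (rule Least_le) blast

theorem mainTheorem1:
  fixes V :: "'a set" and E :: "'a \<Rightarrow> 'a \<Rightarrow> bool"
  assumes "simple_graph V E" and "no_isolated V E"
  shows "(\<forall>f. is_gamma_R_function V E f \<longrightarrow>
            gamma_qtR V E \<le> gamma_R V E + card (lclass V f 2))
       \<and> (\<forall>f'. is_gamma_qtR_function V E f' \<longrightarrow>
            gamma_tR V E \<le> gamma_qtR V E + card (lclass V f' 1))"
proof -
  have fin: "finite V" and sym: "\<And>u v. E u v \<Longrightarrow> E v u"
    using assms(1) unfolding simple_graph_def by auto
  obtain nb where nb: "\<And>v. v \<in> V \<Longrightarrow> nb v \<in> V \<and> E v (nb v)"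
    using assms(2) unfolding no_isolated_def by metis
  show ?thesis
  proof (intro conjI allI impI)
    fix f assume gf: "is_gamma_R_function V E f"
    hence rdf: "is_RDF V E f" and wf: "weight V f = gamma_R V E"
      unfolding is_gamma_R_function_def by auto
    define I where "I = {v \<in> V. f v = 2 \<and> isolated_in_pos V E f v}"
    define S where "S = nb ` I"
    have SV: "S \<subseteq> V" using nb unfolding S_def I_def by auto
    have S0: "\<forall>v\<in>S. f v = 0" using nb unfolding S_def I_def isolated_in_pos_def by auto
    define g where "g = (\<lambda>v. if v \<in> S then 1 else f v)"
    note U = upd_RDF[OF fin rdf SV S0, folded g_def]
    have cS: "card S \<le> card (lclass V f 2)"
    proof -
      have "card S \<le> card I" unfolding S_def using fin I_def by (simp add: card_image_le)
      also have "\<dots> \<le> card (lclass V f 2)"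
        using fin unfolding I_def lclass_def by (intro card_mono) auto
      finally show ?thesis .
    qed
    have "is_QTRDF V E g"
      unfolding is_QTRDF_def
    proof (intro conjI U(1) ballI impI)
      fix v assume vV: "v \<in> V" and g0: "g v \<noteq> 0" and iso: "isolated_in_pos V E g v"
      show "g v = 1"
      proof (cases "v \<in> S")
        case True then show ?thesis unfolding g_def by simp
      next
        case False
        hence gv: "g v = f v" unfolding g_def by simp
        have "f v \<le> 2" using rdf vV unfolding is_RDF_def labeling_def by auto
        moreover have "f v \<noteq> 2"
        proof
          assume f2: "f v = 2"
          show False
          proof (cases "isolated_in_pos V E f v")
            case True
            hence "v \<in> I" using vV f2 I_def by auto
            hence "nb v \<in> S" unfolding S_def by auto
            hence "g (nb v) \<noteq> 0" unfolding g_def by simp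
            thus False using iso nb[OF vV] unfolding isolated_in_pos_def by auto
          next
            case False
            then obtain u where "u \<in> V" "E v u" "f u \<noteq> 0" unfolding isolated_in_pos_def by auto
            moreover have "g u \<noteq> 0" using \<open>f u \<noteq> 0\<close> unfolding g_def by auto
            ultimately show False using iso unfolding isolated_in_pos_def by auto
          qed
        qed
        ultimately show ?thesis using gv g0 by linarith
      qed
    qed
    hence "gamma_qtR V E \<le> weight V g" by (rule qtR_le)
    thus "gamma_qtR V E \<le> gamma_R V E + card (lclass V f 2)"
      using U(2) cS wf by linarith
  next
    fix f assume gf: "is_gamma_qtR_function V E f"
    hence q: "is_QTRDF V E f" and wf: "weight V f = gamma_qtR V E"
      unfolding is_gamma_qtR_function_def by auto
    hence rdf: "is_RDF V E f" unfolding is_QTRDF_def by auto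
    define I where "I = {v \<in> V. f v = 1 \<and> isolated_in_pos V E f v}"
    define S where "S = nb ` I"
    have SV: "S \<subseteq> V" using nb unfolding S_def I_def by auto
    have S0: "\<forall>v\<in>S. f v = 0" using nb unfolding S_def I_def isolated_in_pos_def by auto
    define g where "g = (\<lambda>v. if v \<in> S then 1 else f v)"
    note U = upd_RDF[OF fin rdf SV S0, folded g_def]
    have cS: "card S \<le> card (lclass V f 1)"
    proof -
      have "card S \<le> card I" unfolding S_def using fin I_def by (simp add: card_image_le)
      also have "\<dots> \<le> card (lclass V f 1)"
        using fin unfolding I_def lclass_def by (intro card_mono) auto
      finally show ?thesis .
    qed
    have "is_TRDF V E g"
      unfolding is_TRDF_def
    proof (intro conjI U(1) ballI impI notI)
      fix v assume vV: "v \<in> V" and g0: "g v \<noteq> 0" and iso: "isolated_in_pos V E g v"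
      show False
      proof (cases "v \<in> S")
        case True
        then obtain w where w: "w \<in> I" "v = nb w" unfolding S_def by auto
        have "w \<in> V" "f w = 1" using w I_def by auto
        hence "w \<notin> S" using S0 by auto
        hence "g w \<noteq> 0" using \<open>f w = 1\<close> unfolding g_def by simp
        moreover have "E v w" using sym nb[OF \<open>w \<in> V\<close>] w by auto
        ultimately show False using iso \<open>w \<in> V\<close> unfolding isolated_in_pos_def by auto
      next
        case False
        hence gv: "g v = f v" unfolding g_def by simp
        show False
        proof (cases "isolated_in_pos V E f v")
          case True
          have "f v = 1" using q vV True g0 gv unfolding is_QTRDF_def by auto
          hence "v \<in> I" using vV True I_def by auto
          hence "nb v \<in> S" unfolding S_def by auto
          hence "g (nb v) \<noteq> 0" unfolding g_def by simp
          thus False using iso nb[OF vV] unfolding isolated_in_pos_def by auto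
        next
          case False
          then obtain u where "u \<in> V" "E v u" "f u \<noteq> 0" unfolding isolated_in_pos_def by auto
          moreover have "g u \<noteq> 0" using \<open>f u \<noteq> 0\<close> unfolding g_def by auto
          ultimately show False using iso unfolding isolated_in_pos_def by auto
        qed
      qed
    qed
    hence "gamma_tR V E \<le> weight V g" by (rule tR_le)
    thus "gamma_tR V E \<le> gamma_qtR V E + card (lclass V f 1)"
      using U(2) cS wf by linarith
  qed
qed

end
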